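(* The poset $(P;\leq)$ defined below is order-isomorphic to an order component of some representable poset. Moreover, $(P;\le)$ is connected (it has a single order component).
   Context: Let $P=\{p\}\cup\{p_{i_0,\ldots,i_n}: 0\le n<\omega,\ i_0,\ldots,i_n\in\omega\}$ (all these symbols distinct). Let $\le$ be the reflexive–transitive closure of the following strict relations: (0) for all $0\le j<i<\omega$: $p<p_i<p_j$; (E) for all $r\ge 0$, all $i_0,\ldots,i_{2r}\in\omega$, all $k\le i_{2r}$ and all $i<j<\omega$: $p_{i_0,\ldots,i_{2r},i}<p_{i_0,\ldots,i_{2r},j}<p_{i_0,\ldots,i_{2r-1},k}$ (for $r=0$ the last element is $p_k$); (O) for all $r\ge0$, all $i_0,\ldots,i_{2r+1}\in\omega$, all $k\le i_{2r+1}$ and all $j<i<\omega$: $p_{i_0,\ldots,i_{2r},k}<p_{i_0,\ldots,i_{2r+1},i}<p_{i_0,\ldots,i_{2r+1},j}$. This $\le$ is a partial order on the countable set $P$. A poset is representable if it is order-isomorphic to the poset of prime ideals (ordered by inclusion) of a bounded distributive lattice, equivalently iff it carries a compact topology in which any $x\not\ge y$ are separated by a clopen down-set containing $x$ and not $y$. An order component of a poset is an equivalence class of the transitive closure of the comparability relation. *)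

theory Defs
  imports "HOL-Analysis.Abstract_Topology"
begin

text \<open>Elements of P: the empty list encodes p, a nonempty list [i0,...,in]
  encodes p_{i0,...,in}.  gen x y encodes the generating strict relation x < y.\<close>

inductive gen :: "nat list \<Rightarrow> nat list \<Rightarrow> bool" where
  r0a: "gen [] [i]"
| r0b: "j < i \<Longrightarrow> gen [i] [j]"
| rEa: "odd (length a) \<Longrightarrow> i < j \<Longrightarrow> gen (a @ [i]) (a @ [j])"
| rEb: "odd (length a) \<Longrightarrow> k \<le> last a \<Longrightarrow> gen (a @ [j]) (butlast a @ [k])"
| rOa: "even (length a) \<Longrightarrow> a \<noteq> [] \<Longrightarrow> k \<le> last a \<Longrightarrow> gen (butlast a @ [k]) (a @ [i])"
| rOb: "even (length a) \<Longrightarrow> a \<noteq> [] \<Longrightarrow> j < i \<Longrightarrow> gen (a @ [i]) (a @ [j])"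

definition P_le :: "nat list \<Rightarrow> nat list \<Rightarrow> bool" where
  "P_le = gen\<^sup>*\<^sup>*"

definition partial_order_on_set :: "'a set \<Rightarrow> ('a \<Rightarrow> 'a \<Rightarrow> bool) \<Rightarrow> bool" where
  "partial_order_on_set Q le \<longleftrightarrow>
     (\<forall>x\<in>Q. le x x) \<and>
     (\<forall>x\<in>Q. \<forall>y\<in>Q. le x y \<and> le y x \<longrightarrow> x = y) \<and>
     (\<forall>x\<in>Q. \<forall>y\<in>Q. \<forall>z\<in>Q. le x y \<and> le y z \<longrightarrow> le x z)"

definition down_set :: "'a set \<Rightarrow> ('a \<Rightarrow> 'a \<Rightarrow> bool) \<Rightarrow> 'a set \<Rightarrow> bool" where
  "down_set Q le U \<longleftrightarrow> U \<subseteq> Q \<and> (\<forall>x\<in>U. \<forall>y\<in>Q. le y x \<longrightarrow> y \<in> U)"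

text \<open>Representable poset (Q, le), via the topological characterization: there is a
  compact topology on Q in which any x not \<ge> y are separated by a clopen down-set
  containing x and not y.\<close>
definition representable :: "'a set \<Rightarrow> ('a \<Rightarrow> 'a \<Rightarrow> bool) \<Rightarrow> bool" where
  "representable Q le \<longleftrightarrow> partial_order_on_set Q le \<and>
     (\<exists>T :: 'a topology. topspace T = Q \<and> compact_space T \<and>
        (\<forall>x\<in>Q. \<forall>y\<in>Q. \<not> le y x \<longrightarrow>
           (\<exists>U. openin T U \<and> closedin T U \<and> down_set Q le U \<and> x \<in> U \<and> y \<notin> U)))"

definition comparable_in :: "'a set \<Rightarrow> ('a \<Rightarrow> 'a \<Rightarrow> bool) \<Rightarrow> 'a \<Rightarrow> 'a \<Rightarrow> bool" where
  "comparable_in Q le x y \<longleftrightarrow> x \<in> Q \<and> y \<in> Q \<and> (le x y \<or> le y x)"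

definition order_component :: "'a set \<Rightarrow> ('a \<Rightarrow> 'a \<Rightarrow> bool) \<Rightarrow> 'a set \<Rightarrow> bool" where
  "order_component Q le C \<longleftrightarrow>
     (\<exists>x\<in>Q. C = {y \<in> Q. (comparable_in Q le)\<^sup>*\<^sup>* x y})"

definition order_iso :: "('a \<Rightarrow> 'b) \<Rightarrow> 'a set \<Rightarrow> ('a \<Rightarrow> 'a \<Rightarrow> bool) \<Rightarrow> 'b set \<Rightarrow> ('b \<Rightarrow> 'b \<Rightarrow> bool) \<Rightarrow> bool" where
  "order_iso f A leA B leB \<longleftrightarrow> bij_betw f A B \<and>
     (\<forall>x\<in>A. \<forall>y\<in>A. leA x y \<longleftrightarrow> leB (f x) (f y))"

end

theory Submission
  imports Defs "HOL-Analysis.Function_Topology" "HOL-Library.Sublist"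
begin

lemma gen_cases':
  assumes "gen x y"
  shows "(x = [] \<and> (\<exists>i. y = [i])) \<or> (\<exists>i j. x = [i] \<and> y = [j] \<and> j < i)
    \<or> (\<exists>a i j. odd (length a) \<and> i < j \<and> x = a @ [i] \<and> y = a @ [j])
    \<or> (\<exists>b m j k. even (length b) \<and> k \<le> m \<and> x = b @ [m] @ [j] \<and> y = b @ [k])
    \<or> (\<exists>b m k i. odd (length b) \<and> k \<le> m \<and> x = b @ [k] \<and> y = b @ [m] @ [i])
    \<or> (\<exists>a i j. even (length a) \<and> a \<noteq> [] \<and> j < i \<and> x = a @ [i] \<and> y = a @ [j])"
  using assms
proof cases
  case (rEb a k j)
  obtain b m where a: "a = b @ [m]" using rEb by (cases a rule: rev_cases) auto
  have "even (length b)" using rEb a by simp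
  then have "\<exists>b m j k. even (length b) \<and> k \<le> m \<and> x = b @ [m] @ [j] \<and> y = b @ [k]"
    using rEb a by (intro exI[of _ b] exI[of _ m] exI[of _ j] exI[of _ k]) simp
  then show ?thesis by blast
next
  case (rOa a k i)
  obtain b m where a: "a = b @ [m]" using rOa by (cases a rule: rev_cases) auto
  have "odd (length b)" using rOa a by simp
  then have "\<exists>b m k i. odd (length b) \<and> k \<le> m \<and> x = b @ [k] \<and> y = b @ [m] @ [i]"
    using rOa a by (intro exI[of _ b] exI[of _ m] exI[of _ k] exI[of _ i]) simp
  then show ?thesis by blast
next
  case (r0a i) then show ?thesis by simp
next
  case (r0b j i) then show ?thesis by simp
next
  case (rEa a i j)
  then have "\<exists>a i j. odd (length a) \<and> i < j \<and> x = a @ [i] \<and> y = a @ [j]" by blast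
  then show ?thesis by blast
next
  case (rOb a j i)
  then have "\<exists>a i j. even (length a) \<and> a \<noteq> [] \<and> j < i \<and> x = a @ [i] \<and> y = a @ [j]" by blast
  then show ?thesis by blast
qed

definition phi :: "nat list \<Rightarrow> real" where
  "phi a = (\<Sum>n<length a. (-1)^n / (real (a!n) + 2))"

lemma phi_snoc: "phi (a @ [i]) = phi a + (-1)^(length a) / (real i + 2)"
  unfolding phi_def by (simp add: nth_append)

lemma phi_Nil: "phi [] = 0" by (simp add: phi_def)

lemma gen_phi: "gen x y \<Longrightarrow> phi x < phi y"
proof (induction rule: gen.induct)
  case (r0a i)
  then show ?case using phi_snoc[of "[]" i] by (simp add: phi_Nil)
next
  case (r0b j i)
  then show ?case using phi_snoc[of "[]" i] phi_snoc[of "[]" j] by (simp add: phi_Nil frac_less2)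
next
  case (rEa a i j)
  then show ?case by (simp add: phi_snoc frac_less2)
next
  case (rEb a k j)
  then have ne: "a \<noteq> []" by auto
  define b where "b = butlast a"
  have a: "a = b @ [last a]" using ne b_def by simp
  have eb: "even (length b)" using rEb a by (metis length_append_singleton odd_Suc_div_two even_Suc)
  have "phi (a @ [j]) < phi a" using rEb by (simp add: phi_snoc)
  also have "phi a = phi b + 1 / (real (last a) + 2)" using a eb phi_snoc[of b "last a"] by simp
  also have "\<dots> \<le> phi b + 1 / (real k + 2)" using rEb by (simp add: frac_le)
  also have "\<dots> = phi (b @ [k])" using eb by (simp add: phi_snoc)
  finally show ?case by (simp add: b_def)
next
  case (rOa a k i)
  define b where "b = butlast a"
  have a: "a = b @ [last a]" using rOa b_def by simp
  have ob: "odd (length b)" using rOa a by (metis length_append_singleton even_Suc)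
  have "phi (b @ [k]) = phi b - 1 / (real k + 2)" using ob by (simp add: phi_snoc)
  also have "\<dots> \<le> phi b - 1 / (real (last a) + 2)" using rOa by (simp add: frac_le)
  also have "\<dots> = phi a" using a ob phi_snoc[of b "last a"] by simp
  also have "\<dots> < phi (a @ [i])" using rOa by (simp add: phi_snoc)
  finally show ?case by (simp add: b_def)
next
  case (rOb a j i)
  then show ?case by (simp add: phi_snoc frac_less2)
qed

lemma P_le_phi: "P_le x y \<Longrightarrow> x = y \<or> phi x < phi y"
  unfolding P_le_def
proof (induction rule: rtranclp_induct)
  case (step y z)
  then show ?case using gen_phi by fastforce
qed simp

lemma P_le_antisym: "P_le x y \<Longrightarrow> P_le y x \<Longrightarrow> x = y"
  proof (rule ccontr)
  assume "P_le x y" "P_le y x" "x \<noteq> y"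
  then have "phi x < phi y" "phi y < phi x" using P_le_phi by blast+
  then show False by simp
qed

lemma P_le_refl: "P_le x x" by (simp add: P_le_def)
lemma P_le_trans: "P_le x y \<Longrightarrow> P_le y z \<Longrightarrow> P_le x z"
  unfolding P_le_def by simp
lemma gen_P_le: "gen x y \<Longrightarrow> P_le x y" unfolding P_le_def by simp

lemma parent_comp: "P_le ys (ys @ [i]) \<or> P_le (ys @ [i]) ys"
proof (cases "even (length ys)")
  case True
  show ?thesis
  proof (cases "ys = []")
    case True then show ?thesis using gen.r0a gen_P_le by auto
  next
    case False
    then have "gen (butlast ys @ [last ys]) (ys @ [i])" using True by (intro gen.rOa) auto
    then show ?thesis using False gen_P_le by auto
  qed
next
  case False
  then have "gen (ys @ [i]) (butlast ys @ [last ys])" by (intro gen.rEb) auto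
  moreover have "ys \<noteq> []" using False by auto
  ultimately show ?thesis using gen_P_le by auto
qed

lemma P_conn: "(comparable_in UNIV P_le)\<^sup>*\<^sup>* [] y"
proof (induction y rule: rev_induct)
  case Nil then show ?case by simp
next
  case (snoc i ys)
  have "comparable_in UNIV P_le ys (ys @ [i])" using parent_comp by (simp add: comparable_in_def)
  then show ?case using snoc by (meson rtranclp.rtrancl_into_rtrancl)
qed

lemma P_component: "order_component (UNIV :: nat list set) P_le UNIV"
  unfolding order_component_def using P_conn by blast


lemma prefix_snoc_snoc: "prefix (a @ [i]) (c @ [j]) \<longleftrightarrow> (a = c \<and> i = j) \<or> prefix (a @ [i]) c"
  by (auto simp: prefix_snoc)

lemma down_step:
  assumes g: "gen x y" and oa: "odd (length a)" and p: "prefix (a @ [i]) y"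
  shows "\<exists>i'\<le>i. prefix (a @ [i']) x"
  using gen_cases'[OF g]
proof (elim disjE exE conjE)
  fix i0 assume "x = []" "y = [i0]" then show ?thesis using p oa by (auto simp: prefix_Cons)
next
  fix i0 j0 assume "x = [i0]" "y = [j0]" then show ?thesis using p oa by (auto simp: prefix_Cons)
next
  fix c i0 j0 assume h: "odd (length c)" "i0 < j0" "x = c @ [i0]" "y = c @ [j0]"
  from p h have "(a = c \<and> i = j0) \<or> prefix (a @ [i]) c" by (simp add: prefix_snoc_snoc)
  then show ?thesis
  proof
    assume "a = c \<and> i = j0" then show ?thesis using h by (intro exI[of _ i0]) auto
  next
    assume "prefix (a @ [i]) c" then show ?thesis using h by (metis le_refl prefix_snoc)
  qed
next
  fix b m j k assume h: "even (length b)" "k \<le> m" "x = b @ [m] @ [j]" "y = b @ [k]"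
  from p h have "(a = b \<and> i = k) \<or> prefix (a @ [i]) b" by (simp add: prefix_snoc_snoc)
  then show ?thesis using h oa
    by (metis append_assoc le_refl prefix_append prefix_order.dual_order.trans)
next
  fix b m k i0 assume h: "odd (length b)" "k \<le> m" "x = b @ [k]" "y = b @ [m] @ [i0]"
  from p h have "(a = b @ [m]) \<or> prefix (a @ [i]) (b @ [m])"
    by (metis append_assoc prefix_snoc_snoc)
  then have "prefix (a @ [i]) (b @ [m])" using oa h by auto
  then have "(a = b \<and> i = m) \<or> prefix (a @ [i]) b" by (simp add: prefix_snoc_snoc)
  then show ?thesis using h
    by (metis le_refl prefix_snoc)
next
  fix c i0 j0 assume h: "even (length c)" "c \<noteq> []" "j0 < i0" "x = c @ [i0]" "y = c @ [j0]"
  from p h have "(a = c \<and> i = j0) \<or> prefix (a @ [i]) c" by (simp add: prefix_snoc_snoc)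
  then have "prefix (a @ [i]) c" using h oa by auto
  then show ?thesis using h by (metis le_refl prefix_snoc)
qed

lemma up_step:
  assumes g: "gen x y" and ea: "even (length a)" and p: "prefix (a @ [i]) x"
  shows "\<exists>i'\<le>i. prefix (a @ [i']) y"
  using gen_cases'[OF g]
proof (elim disjE exE conjE)
  fix i0 assume "x = []" "y = [i0]" then show ?thesis using p by auto
next
  fix i0 j0 assume h: "x = [i0]" "y = [j0]" "j0 < i0"
  then have "a = [] \<and> i = i0" using p by (auto simp: prefix_Cons)
  then show ?thesis using h by auto
next
  fix c i0 j0 assume h: "odd (length c)" "i0 < j0" "x = c @ [i0]" "y = c @ [j0]"
  from p h have "(a = c \<and> i = i0) \<or> prefix (a @ [i]) c" by (simp add: prefix_snoc_snoc)
  then have "prefix (a @ [i]) c" using h ea by auto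
  then show ?thesis using h by (metis le_refl prefix_snoc)
next
  fix b m j k assume h: "even (length b)" "k \<le> m" "x = b @ [m] @ [j]" "y = b @ [k]"
  from p h have "(a = b @ [m]) \<or> prefix (a @ [i]) (b @ [m])"
    by (metis append_assoc prefix_snoc_snoc)
  then have "prefix (a @ [i]) (b @ [m])" using ea h by auto
  then have "(a = b \<and> i = m) \<or> prefix (a @ [i]) b" by (simp add: prefix_snoc_snoc)
  then show ?thesis using h
    by (metis le_refl prefix_snoc)
next
  fix b m k i0 assume h: "odd (length b)" "k \<le> m" "x = b @ [k]" "y = b @ [m] @ [i0]"
  from p h have "(a = b \<and> i = k) \<or> prefix (a @ [i]) b" by (simp add: prefix_snoc_snoc)
  then have "prefix (a @ [i]) b" using h ea by auto
  then show ?thesis using h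
    by (metis append_assoc le_refl prefix_append prefix_order.dual_order.trans)
next
  fix c i0 j0 assume h: "even (length c)" "c \<noteq> []" "j0 < i0" "x = c @ [i0]" "y = c @ [j0]"
  from p h have "(a = c \<and> i = i0) \<or> prefix (a @ [i]) c" by (simp add: prefix_snoc_snoc)
  then show ?thesis using h
    by (metis less_imp_le le_refl prefix_snoc)
qed

lemma down_P_le:
  assumes "P_le x y" "odd (length a)" "prefix (a @ [i]) y"
  shows "\<exists>i'\<le>i. prefix (a @ [i']) x"
  using assms(1,3) unfolding P_le_def
proof (induction arbitrary: i rule: converse_rtranclp_induct)
  case base then show ?case by auto
next
  case (step x z)
  obtain i' where "i' \<le> i" "prefix (a @ [i']) z" using step by blast
  then obtain i'' where "i'' \<le> i'" "prefix (a @ [i'']) x" using down_step[OF step(1) assms(2)] by blast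
  then show ?case using \<open>i' \<le> i\<close> by (meson order_trans)
qed

lemma up_P_le:
  assumes "P_le x y" "even (length a)" "prefix (a @ [i]) x"
  shows "\<exists>i'\<le>i. prefix (a @ [i']) y"
  using assms(1,3) unfolding P_le_def
proof (induction arbitrary: i rule: rtranclp_induct)
  case base then show ?case by auto
next
  case (step y z)
  obtain i' where "i' \<le> i" "prefix (a @ [i']) y" using step by blast
  then obtain i'' where "i'' \<le> i'" "prefix (a @ [i'']) z" using up_step[OF step(2) assms(2)] by blast
  then show ?case using \<open>i' \<le> i\<close> by (meson order_trans)
qed


definition PT :: "(nat list \<Rightarrow> bool) topology" where
  "PT = product_topology (\<lambda>_. discrete_topology UNIV) UNIV"

definition Kset :: "(nat list \<Rightarrow> bool) set" where
  "Kset = {s. s [] \<and> (\<forall>l x. s (l @ [x]) \<longrightarrow> s l) \<and> (\<forall>l i j. s (l @ [i]) \<and> s (l @ [j]) \<longrightarrow> i = j)}"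

definition emb :: "(nat list \<Rightarrow> bool) \<Rightarrow> nat list set set" where
  "emb s = (\<lambda>l. {l}) ` {l. s l}"

definition hh :: "nat list set set \<Rightarrow> nat list \<Rightarrow> bool" where
  "hh z = (\<lambda>l. {l} \<in> z)"

definition Qs :: "nat list set set set" where "Qs = emb ` Kset"

definition TT :: "nat list set set topology" where "TT = pullback_topology Qs hh PT"

lemma hh_emb[simp]: "hh (emb s) = s"
  unfolding hh_def emb_def by (rule ext) auto

lemma topspace_PT[simp]: "topspace PT = UNIV"
  unfolding PT_def by simp

lemma topspace_TT[simp]: "topspace TT = Qs"
  unfolding TT_def topspace_pullback_topology by simp

lemma openin_PT_coord: "openin PT {s. s l}" and closedin_PT_coord: "closedin PT {s. s l}"
proof -
  have c: "continuous_map PT (discrete_topology UNIV) (\<lambda>x. x l)"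
    unfolding PT_def by (rule continuous_map_product_projection) simp
  have "openin PT {x \<in> topspace PT. x l \<in> {True}}"
    by (rule openin_continuous_map_preimage[OF c]) simp
  then show "openin PT {s. s l}" by simp
  have "closedin PT {x \<in> topspace PT. x l \<in> {True}}"
    by (rule closedin_continuous_map_preimage[OF c]) simp
  then show "closedin PT {s. s l}" by simp
qed

lemma closedin_PT_ncoord: "closedin PT {s. \<not> s l}"
proof -
  have "{s. \<not> s l} = topspace PT - {s. s l}" by auto
  then show ?thesis using closedin_diff[OF closedin_topspace[of PT] openin_PT_coord[of l]] by simp
qed

lemma Kset_closed: "closedin PT Kset"
proof -
  define A where "A = {s :: nat list \<Rightarrow> bool. s []}"
  define B where "B = (\<lambda>(l, x). {s :: nat list \<Rightarrow> bool. s (l @ [x]) \<longrightarrow> s l})"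
  define C where "C = (\<lambda>(l, i, j). {s :: nat list \<Rightarrow> bool. s (l @ [i]) \<and> s (l @ [j]) \<longrightarrow> i = j})"
  have eq: "Kset = A \<inter> \<Inter>(range B) \<inter> \<Inter>(range C)"
    unfolding Kset_def A_def B_def C_def by auto
  have cA: "closedin PT A" unfolding A_def by (rule closedin_PT_coord)
  have cB: "closedin PT (B p)" for p
  proof -
    obtain l x where p: "p = (l, x)" by (cases p)
    have "B p = {s. \<not> s (l @ [x])} \<union> {s. s l}" unfolding p B_def by auto
    then show ?thesis by (simp add: closedin_Un closedin_PT_coord closedin_PT_ncoord)
  qed
  have cC: "closedin PT (C p)" for p
  proof -
    obtain l i j where p: "p = (l, i, j)" by (cases p) auto
    show ?thesis
    proof (cases "i = j")
      case True
      then have "C p = topspace PT" unfolding p C_def by auto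
      then show ?thesis by (metis closedin_topspace)
    next
      case False
      then have "C p = {s. \<not> s (l @ [i])} \<union> {s. \<not> s (l @ [j])}" unfolding p C_def by auto
      then show ?thesis by (simp add: closedin_Un closedin_PT_ncoord)
    qed
  qed
  have "closedin PT (\<Inter>(range B))" by (rule closedin_Inter) (auto intro: cB)
  moreover have "closedin PT (\<Inter>(range C))" by (rule closedin_Inter) (auto intro: cC)
  ultimately show ?thesis unfolding eq using cA by (intro closedin_Int)
qed

lemma PT_compact: "compact_space PT"
  unfolding PT_def compact_space_product_topology
  by (simp add: compact_space_discrete_topology)

lemma Kset_compact: "compactin PT Kset"
  using closedin_compact_space[OF PT_compact Kset_closed] .

lemma TT_compact: "compact_space TT"
proof -
  have "continuous_map (subtopology PT Kset) TT emb"
    unfolding TT_def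
  proof (rule continuous_map_pullback')
    have "continuous_map (subtopology PT Kset) PT id"
      by (simp add: continuous_map_from_subtopology)
    then show "continuous_map (subtopology PT Kset) PT (hh \<circ> emb)"
      by (simp add: o_def id_def)
    show "topspace (subtopology PT Kset) \<subseteq> emb -` Qs"
      by (auto simp: Qs_def)
  qed
  moreover have "compactin (subtopology PT Kset) Kset"
    using Kset_compact by (simp add: compactin_subtopology)
  ultimately have "compactin TT (emb ` Kset)" using image_compactin by blast
  then show ?thesis by (simp add: compact_space_def Qs_def)
qed

definition Cy :: "nat list \<Rightarrow> nat list set set set" where
  "Cy l = {z \<in> Qs. hh z l}"

lemma Cy_clopen: "openin TT (Cy l)" "closedin TT (Cy l)"
proof -
  have "Cy l = hh -` {s. s l} \<inter> Qs" unfolding Cy_def by auto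
  then show "openin TT (Cy l)" unfolding TT_def openin_pullback_topology
    using openin_PT_coord by blast
  have "Qs - Cy l = hh -` (UNIV - {s. s l}) \<inter> Qs" unfolding Cy_def by auto
  moreover have "openin PT (UNIV - {s. s l})"
    using closedin_PT_coord by (metis closedin_def topspace_PT)
  ultimately have "openin TT (Qs - Cy l)" unfolding TT_def openin_pullback_topology by blast
  then show "closedin TT (Cy l)" unfolding closedin_def by (auto simp: Cy_def)
qed

definition Sk :: "nat list \<Rightarrow> nat \<Rightarrow> nat list set set set" where
  "Sk a k = {z \<in> Qs. \<exists>i\<le>k. hh z (a @ [i])}"

lemma Sk_clopen: "openin TT (Sk a k)" "closedin TT (Sk a k)"
proof -
  have e: "Sk a k = (\<Union>i\<in>{..k}. Cy (a @ [i]))" unfolding Sk_def Cy_def by auto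
  show "openin TT (Sk a k)" unfolding e by (intro openin_Union) (auto simp: Cy_clopen)
  show "closedin TT (Sk a k)" unfolding e by (intro closedin_Union) (auto simp: Cy_clopen)
qed


lemma K_nil: "s \<in> Kset \<Longrightarrow> s []" unfolding Kset_def by simp
lemma K_pref: "s \<in> Kset \<Longrightarrow> s (l @ [x]) \<Longrightarrow> s l" unfolding Kset_def by blast
lemma K_uniq: "s \<in> Kset \<Longrightarrow> s (l @ [i]) \<Longrightarrow> s (l @ [j]) \<Longrightarrow> i = j"
  unfolding Kset_def by simp

lemma K_closure:
  assumes s: "s \<in> Kset" shows "s b \<Longrightarrow> prefix l b \<Longrightarrow> s l"
proof (induction b rule: rev_induct)
  case Nil then show ?case by simp
next
  case (snoc x b)
  have sb: "s b" using K_pref[OF s snoc(2)] .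
  from snoc(3) have "l = b @ [x] \<or> prefix l b" by simp
  then show ?case using snoc sb by blast
qed

lemma K_samelen:
  assumes s: "s \<in> Kset" shows "s l \<Longrightarrow> s l' \<Longrightarrow> length l = length l' \<Longrightarrow> l = l'"
proof (induction l arbitrary: l' rule: rev_induct)
  case Nil then show ?case by simp
next
  case (snoc x l)
  obtain l0 y where l': "l' = l0 @ [y]" using snoc(4) by (cases l' rule: rev_cases) auto
  have "s l" using K_pref[OF s snoc(2)] .
  moreover have "s l0" using K_pref[OF s, of l0 y] snoc(3) l' by simp
  ultimately have "l = l0" using snoc(1)[of l0] snoc(4) l' by simp
  then show ?case using K_uniq[OF s, of l x y] snoc(2,3) l' by simp
qed

lemma K_chain:
  assumes s: "s \<in> Kset" "s l" "s m" "length l \<le> length m" shows "prefix l m"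
proof -
  have "s (take (length l) m)" using K_closure[OF s(1) s(3) take_is_prefix] .
  then have "l = take (length l) m" using K_samelen[OF s(1) s(2)] s(4) by simp
  then show ?thesis by (metis take_is_prefix)
qed

definition pre :: "nat list \<Rightarrow> nat list \<Rightarrow> bool" where "pre a = (\<lambda>l. prefix l a)"

lemma snoc_prefix_snoc: "prefix (l @ [i]) (l @ [j]) \<Longrightarrow> i = j"
proof -
  assume "prefix (l @ [i]) (l @ [j])"
  then have "l @ [i] = l @ [j] \<or> prefix (l @ [i]) l" by simp
  moreover have "\<not> prefix (l @ [i]) l" using prefix_length_le[of "l @ [i]" l] by auto
  ultimately show "i = j" by simp
qed

lemma pre_Kset: "pre a \<in> Kset"
  unfolding Kset_def pre_def mem_Collect_eq
proof (intro conjI allI impI)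
  show "prefix [] a" by simp
next
  fix l x assume "prefix (l @ [x]) a"
  then have "strict_prefix l a" by (rule prefix_snocD)
  then show "prefix l a" by (rule prefix_order.dual_order.strict_implies_order)
next
  fix l i j assume h: "prefix (l @ [i]) a \<and> prefix (l @ [j]) a"
  then have "prefix (l @ [i]) (l @ [j]) \<or> prefix (l @ [j]) (l @ [i])"
    using prefix_same_cases by blast
  then show "i = j" using snoc_prefix_snoc by metis
qed

lemma K_class:
  assumes s: "s \<in> Kset"
  shows "(\<exists>a. s = pre a) \<or> (\<forall>n. \<exists>l. s l \<and> n \<le> length l)"
proof (cases "\<forall>n. \<exists>l. s l \<and> n \<le> length l")
  case False
  then obtain n where n: "\<forall>l. s l \<longrightarrow> length l < n" by (meson not_le)
  have "s []" using s K_nil by blast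
  then obtain a where a: "s a" "\<forall>l. s l \<longrightarrow> length l \<le> length a"
    using Lattices_Big.ex_has_greatest_nat[of s "[]" length n] n by blast
  have "s = pre a"
  proof (rule ext)
    fix l show "s l = pre a l"
      unfolding pre_def using K_chain[OF s _ a(1)] a K_closure[OF s a(1)] by blast
  qed
  then show ?thesis by blast
qed simp

lemma K_eq:
  assumes s: "s \<in> Kset" and t: "t \<in> Kset" and u: "\<forall>n. \<exists>l. s l \<and> n \<le> length l"
    and st: "\<forall>l. s l \<longrightarrow> t l"
  shows "s = t"
proof (rule ext)
  fix l show "s l = t l"
  proof
    assume "t l"
    obtain m where m: "s m" "length l \<le> length m" using u by blast
    have "prefix l m" using K_chain[OF t \<open>t l\<close> _ m(2)] st m(1) by blast
    then show "s l" using K_closure[OF s m(1)] by blast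
  qed (use st in blast)
qed

lemma K_ext:
  assumes s: "s \<in> Kset" and u: "\<forall>n. \<exists>l. s l \<and> n \<le> length l" and sl: "s l"
  shows "\<exists>a k. prefix l a \<and> (even (length a) \<longleftrightarrow> e) \<and> s (a @ [k])"
proof -
  obtain m where m: "s m" "length l + 2 \<le> length m" using u by blast
  have lm: "prefix l m" using K_chain[OF s sl m(1)] m(2) by simp
  define j where "j = (if even (length l) = e then length l else length l + 1)"
  have jm: "j < length m" "length l \<le> j" "even j = e" using m(2) unfolding j_def by auto
  have "take (Suc j) m = take j m @ [m ! j]" using jm by (simp add: take_Suc_conv_app_nth)
  then have s1: "s (take j m @ [m ! j])" using K_closure[OF s m(1)] take_is_prefix by metis
  have "take (length l) m = l" using lm by (metis append_eq_conv_conj prefix_def)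
  then have "prefix l (take j m)"
    using jm(2) by (metis min_def take_is_prefix take_take)
  moreover have "even (length (take j m)) = e" using jm by simp
  ultimately show ?thesis using s1 by blast
qed

definition fnode :: "nat list \<Rightarrow> nat list set set" where "fnode a = emb (pre a)"

lemma hh_fnode[simp]: "hh (fnode a) l = prefix l a"
  unfolding fnode_def pre_def by simp

lemma fnode_inj: "fnode a = fnode b \<Longrightarrow> a = b"
proof -
  assume e: "fnode a = fnode b"
  have "hh (fnode a) a" by simp
  then have "hh (fnode b) a" by (simp only: e)
  then have 1: "prefix a b" by simp
  have "hh (fnode b) b" by simp
  then have "hh (fnode a) b" by (simp only: e)
  then have 2: "prefix b a" by simp
  from 1 2 have "prefix a b" "prefix b a" .
  then show "a = b" by (rule prefix_order.antisym)
qed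

lemma fnode_Qs: "fnode a \<in> Qs" unfolding fnode_def Qs_def using pre_Kset by blast

lemma Qs_emb: "z \<in> Qs \<Longrightarrow> z = emb (hh z) \<and> hh z \<in> Kset"
  unfolding Qs_def by auto

definition leQ :: "nat list set set \<Rightarrow> nat list set set \<Rightarrow> bool" where
  "leQ z z' \<longleftrightarrow> z = z' \<or> (\<exists>a b. z = fnode a \<and> z' = fnode b \<and> P_le a b)"

lemma leQ_fnode: "leQ (fnode a) (fnode b) \<longleftrightarrow> P_le a b"
proof
  assume "leQ (fnode a) (fnode b)"
  then consider "fnode a = fnode b" | a' b' where "fnode a = fnode a'" "fnode b = fnode b'" "P_le a' b'"
    unfolding leQ_def by blast
  then show "P_le a b"
  proof cases
    case 1 then show ?thesis using fnode_inj P_le_refl by metis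
  next
    case 2 then show ?thesis using fnode_inj by metis
  qed
qed (auto simp: leQ_def)

definition upset :: "nat list set set set \<Rightarrow> bool" where
  "upset V \<longleftrightarrow> V \<subseteq> Qs \<and> (\<forall>x\<in>V. \<forall>y\<in>Qs. leQ x y \<longrightarrow> y \<in> V)"

lemma Sk_down: "odd (length a) \<Longrightarrow> down_set Qs leQ (Sk a k)"
  unfolding down_set_def
proof (intro conjI ballI impI)
  show "Sk a k \<subseteq> Qs" unfolding Sk_def by blast
  fix x y assume oa: "odd (length a)" and x: "x \<in> Sk a k" and y: "y \<in> Qs" and le: "leQ y x"
  show "y \<in> Sk a k"
  proof (cases "y = x")
    case False
    then obtain c d where cd: "y = fnode c" "x = fnode d" "P_le c d" using le unfolding leQ_def by blast
    obtain i where i: "i \<le> k" "prefix (a @ [i]) d" using x cd unfolding Sk_def by auto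
    obtain i' where "i' \<le> i" "prefix (a @ [i']) c" using down_P_le[OF cd(3) oa i(2)] by blast
    then have "\<exists>i\<le>k. hh y (a @ [i])" using cd i by (auto intro: order_trans)
    then show ?thesis using y unfolding Sk_def by blast
  qed (use x in simp)
qed

lemma Sk_up: "even (length a) \<Longrightarrow> upset (Sk a k)"
  unfolding upset_def
proof (intro conjI ballI impI)
  show "Sk a k \<subseteq> Qs" unfolding Sk_def by blast
  fix x y assume ea: "even (length a)" and x: "x \<in> Sk a k" and y: "y \<in> Qs" and le: "leQ x y"
  show "y \<in> Sk a k"
  proof (cases "y = x")
    case False
    then obtain c d where cd: "x = fnode c" "y = fnode d" "P_le c d" using le unfolding leQ_def by blast
    obtain i where i: "i \<le> k" "prefix (a @ [i]) c" using x cd unfolding Sk_def by auto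
    obtain i' where "i' \<le> i" "prefix (a @ [i']) d" using up_P_le[OF cd(3) ea i(2)] by blast
    then have "\<exists>i\<le>k. hh y (a @ [i])" using cd i by (auto intro: order_trans)
    then show ?thesis using y unfolding Sk_def by blast
  qed (use x in simp)
qed

lemma compl_down: "upset V \<Longrightarrow> down_set Qs leQ (Qs - V)"
  unfolding upset_def down_set_def by blast

definition sep :: "nat list set set \<Rightarrow> nat list set set \<Rightarrow> bool" where
  "sep x y \<longleftrightarrow> (\<exists>U. openin TT U \<and> closedin TT U \<and> down_set Qs leQ U \<and> x \<in> U \<and> y \<notin> U)"

lemma G1:
  assumes x: "x \<in> Qs" and y: "y \<in> Qs" and d: "even (length d)" and yd: "hh y (d @ [n])"
    and xd: "\<forall>n'\<le>n. \<not> hh x (d @ [n'])"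
  shows "sep x y"
proof -
  have "openin TT (Qs - Sk d n)"
    using openin_diff[OF openin_topspace Sk_clopen(2)] by simp
  moreover have "closedin TT (Qs - Sk d n)"
    using closedin_diff[OF closedin_topspace Sk_clopen(1)] by simp
  moreover have "down_set Qs leQ (Qs - Sk d n)" using compl_down Sk_up d by blast
  moreover have "x \<in> Qs - Sk d n" using x xd unfolding Sk_def by auto
  moreover have "y \<notin> Qs - Sk d n" using y yd unfolding Sk_def by auto
  ultimately show ?thesis unfolding sep_def by blast
qed

lemma G3:
  assumes x: "x \<in> Qs" and a: "odd (length a)" and xa: "hh x (a @ [k])" and y: "y \<notin> Sk a k"
  shows "sep x y"
proof -
  have "x \<in> Sk a k" using x xa unfolding Sk_def by auto
  then show ?thesis unfolding sep_def
    by (intro exI[of _ "Sk a k"] conjI Sk_clopen Sk_down[OF a] y)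
qed

lemma G2:
  assumes x: "x \<in> Qs" and y: "y \<in> Qs" and a: "odd (length a)" and xa: "hh x (a @ [k])"
    and ya: "\<not> hh y a"
  shows "sep x y"
proof (rule G3[OF x a xa])
  have "hh y \<in> Kset" using Qs_emb[OF y] by simp
  then show "y \<notin> Sk a k" using ya K_pref unfolding Sk_def by blast
qed


lemma PX: "prefix p y \<Longrightarrow> p \<noteq> y \<Longrightarrow> \<exists>j. prefix (p @ [j]) y"
proof -
  assume "prefix p y" "p \<noteq> y"
  then obtain r where r: "y = p @ r" "r \<noteq> []" by (auto simp: prefix_def)
  then obtain j r' where "r = j # r'" by (cases r) auto
  then show ?thesis using r by (intro exI[of _ j]) (simp add: prefix_def)
qed

lemma not_prefix_long: "length x < length p + 1 \<Longrightarrow> \<not> prefix (p @ [n]) x"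
  using prefix_length_le[of "p @ [n]" x] by auto

lemma sep_node_3d:
  assumes np: "\<not> P_le ya (b @ [k])" and eb: "even (length b)" and pb: "prefix b ya"
    and A: "\<forall>i<k. \<not> prefix (b @ [i]) ya"
  shows "sep (fnode (b @ [k])) (fnode ya)"
proof -
  have "P_le b (b @ [k])"
  proof (cases "b = []")
    case True then show ?thesis using gen.r0a gen_P_le by simp
  next
    case False
    have "gen (butlast b @ [last b]) (b @ [k])" using False eb by (intro gen.rOa) auto
    then show ?thesis using False gen_P_le by simp
  qed
  then have "ya \<noteq> b" using np by blast
  then obtain j where j: "prefix (b @ [j]) ya" using PX pb by blast
  then have jk: "k \<le> j" using A by (meson not_le)
  have "P_le (b @ [j]) (b @ [k])"
  proof (cases "j = k")
    case True then show ?thesis by (simp add: P_le_refl)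
  next
    case False
    then have jk': "k < j" using jk by simp
    show ?thesis
    proof (cases "b = []")
      case True then show ?thesis using gen.r0b[OF jk'] gen_P_le by simp
    next
      case False then show ?thesis using gen.rOb[OF eb False jk'] gen_P_le by simp
    qed
  qed
  then have "ya \<noteq> b @ [j]" using np by blast
  then obtain m where m: "prefix ((b @ [j]) @ [m]) ya" using PX j by blast
  have "gen ((b @ [j]) @ [m]) (butlast (b @ [j]) @ [k])"
    using eb jk by (intro gen.rEb) auto
  then have "P_le ((b @ [j]) @ [m]) (b @ [k])" using gen_P_le by simp
  then have "ya \<noteq> (b @ [j]) @ [m]" using np by blast
  then obtain n where n: "prefix (((b @ [j]) @ [m]) @ [n]) ya" using PX m by blast
  show ?thesis
  proof (rule G1[OF fnode_Qs fnode_Qs])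
    show "even (length ((b @ [j]) @ [m]))" using eb by simp
    show "hh (fnode ya) (((b @ [j]) @ [m]) @ [n])" using n by simp
    show "\<forall>n'\<le>n. \<not> hh (fnode (b @ [k])) (((b @ [j]) @ [m]) @ [n'])"
      using not_prefix_long by simp
  qed
qed

lemma sep_node:
  assumes np: "\<not> P_le ya xa" shows "sep (fnode xa) (fnode ya)"
proof (cases xa rule: rev_cases)
  case Nil
  then have "ya \<noteq> []" using np P_le_refl by blast
  then obtain j r where ya: "ya = j # r" by (cases ya) auto
  show ?thesis
  proof (rule G1[OF fnode_Qs fnode_Qs])
    show "even (length ([] :: nat list))" by simp
    show "hh (fnode ya) ([] @ [j])" using ya by simp
    show "\<forall>n'\<le>j. \<not> hh (fnode xa) ([] @ [n'])" using Nil by simp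
  qed
next
  case (snoc b k)
  show ?thesis
  proof (cases "odd (length b)")
    case ob: True
    have hx: "hh (fnode xa) (b @ [k])" using snoc by simp
    show ?thesis
    proof (cases "fnode ya \<in> Sk b k")
      case False then show ?thesis using G3[OF fnode_Qs ob hx] by blast
    next
      case True
      then obtain i where i: "i \<le> k" "prefix (b @ [i]) ya" unfolding Sk_def by auto
      have "P_le (b @ [i]) (b @ [k])"
      proof (cases "i = k")
        case True then show ?thesis by (simp add: P_le_refl)
      next
        case False
        then have "i < k" using i by simp
        then show ?thesis using gen.rEa[OF ob] gen_P_le by blast
      qed
      then have "ya \<noteq> b @ [i]" using np snoc by blast
      then obtain j where j: "prefix ((b @ [i]) @ [j]) ya" using PX i by blast
      show ?thesis
      proof (rule G1[OF fnode_Qs fnode_Qs])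
        show "even (length (b @ [i]))" using ob by simp
        show "hh (fnode ya) ((b @ [i]) @ [j])" using j by simp
        show "\<forall>n'\<le>j. \<not> hh (fnode xa) ((b @ [i]) @ [n'])" using snoc not_prefix_long by simp
      qed
    qed
  next
    case eb0: False
    then have eb: "even (length b)" by simp
    show ?thesis
    proof (cases "\<exists>i<k. prefix (b @ [i]) ya")
      case True
      then obtain i where i: "i < k" "prefix (b @ [i]) ya" by blast
      show ?thesis
      proof (rule G1[OF fnode_Qs fnode_Qs])
        show "even (length b)" by (rule eb)
        show "hh (fnode ya) (b @ [i])" using i by simp
        show "\<forall>n'\<le>i. \<not> hh (fnode xa) (b @ [n'])"
        proof (intro allI impI)
          fix n' assume "n' \<le> i"
          then have "n' \<noteq> k" using i by simp
          moreover have "\<not> prefix (b @ [n']) b" using not_prefix_long[of b b] by simp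
          ultimately show "\<not> hh (fnode xa) (b @ [n'])" using snoc by simp
        qed
      qed
    next
      case False
      then have A: "\<forall>i<k. \<not> prefix (b @ [i]) ya" by blast
      have np': "\<not> P_le ya (b @ [k])" using np snoc by simp
      show ?thesis
      proof (cases b rule: rev_cases)
        case Nil
        then show ?thesis using sep_node_3d[OF np' eb _ A] snoc by simp
      next
        case (snoc c l)
        have oc: "odd (length c)" using eb snoc by simp
        have hx: "hh (fnode xa) (c @ [l])" using snoc \<open>xa = b @ [k]\<close> by simp
        show ?thesis
        proof (cases "fnode ya \<in> Sk c l")
          case False then show ?thesis using G3[OF fnode_Qs oc hx] by blast
        next
          case True
          then obtain i where i: "i \<le> l" "prefix (c @ [i]) ya" unfolding Sk_def by auto
          show ?thesis
          proof (cases "i = l")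
            case True
            then show ?thesis using sep_node_3d[OF np' eb _ A] snoc i \<open>xa = b @ [k]\<close> by simp
          next
            case False
            have "gen (butlast (c @ [l]) @ [i]) ((c @ [l]) @ [k])"
              using eb snoc i by (intro gen.rOa) auto
            then have "P_le (c @ [i]) (b @ [k])" using snoc gen_P_le by simp
            then have "ya \<noteq> c @ [i]" using np' by blast
            then obtain j where j: "prefix ((c @ [i]) @ [j]) ya" using PX i by blast
            show ?thesis
            proof (rule G1[OF fnode_Qs fnode_Qs])
              show "even (length (c @ [i]))" using oc by simp
              show "hh (fnode ya) ((c @ [i]) @ [j])" using j by simp
              show "\<forall>n'\<le>j. \<not> hh (fnode xa) ((c @ [i]) @ [n'])"
              proof (intro allI impI)
                fix n'
                have "\<not> prefix ((c @ [i]) @ [n']) (c @ [l])" using not_prefix_long[of "c @ [l]" "c @ [i]"] by simp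
                moreover have "(c @ [i]) @ [n'] \<noteq> (c @ [l]) @ [k]" using False by simp
                ultimately show "\<not> hh (fnode xa) ((c @ [i]) @ [n'])"
                  using snoc \<open>xa = b @ [k]\<close> by (simp only: hh_fnode prefix_snoc) simp
              qed
            qed
          qed
        qed
      qed
    qed
  qed
qed


lemma leQ_refl: "leQ z z" unfolding leQ_def by simp

lemma sep_main:
  assumes x: "x \<in> Qs" and y: "y \<in> Qs" and nle: "\<not> leQ y x"
  shows "sep x y"
proof -
  define s where "s = hh x"
  define t where "t = hh y"
  have xs: "x = emb s" "s \<in> Kset" using Qs_emb[OF x] s_def by auto
  have yt: "y = emb t" "t \<in> Kset" using Qs_emb[OF y] t_def by auto
  have xy: "x \<noteq> y" using nle leQ_refl by blast
  show ?thesis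
  proof (cases "\<exists>a. s = pre a")
    case True
    then obtain xa where xa: "s = pre xa" by blast
    then have xf: "x = fnode xa" using xs fnode_def by simp
    show ?thesis
    proof (cases "\<exists>a. t = pre a")
      case True
      then obtain ya where ya: "t = pre ya" by blast
      then have yf: "y = fnode ya" using yt fnode_def by simp
      have "\<not> P_le ya xa" using nle xf yf leQ_fnode by blast
      then show ?thesis using sep_node xf yf by simp
    next
      case False
      then have u: "\<forall>n. \<exists>l. t l \<and> n \<le> length l" using K_class[OF yt(2)] by blast
      have "\<not> (\<forall>l. t l \<longrightarrow> s l)"
      proof
        assume "\<forall>l. t l \<longrightarrow> s l"
        then have "t = s" using K_eq[OF yt(2) xs(2) u] by blast
        then show False using xy xs yt by simp
      qed
      then obtain l where l: "t l" "\<not> s l" by blast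
      obtain d n where d: "prefix l d" "even (length d)" "t (d @ [n])"
        using K_ext[OF yt(2) u l(1), of True] by blast
      show ?thesis
      proof (rule G1[OF x y d(2)])
        show "hh y (d @ [n])" using d t_def by simp
        show "\<forall>n'\<le>n. \<not> hh x (d @ [n'])"
        proof (intro allI impI notI)
          fix n' assume "hh x (d @ [n'])"
          then have "s (d @ [n'])" using s_def by simp
          moreover have "prefix l (d @ [n'])" using d(1) by (simp add: prefix_order.trans[OF _ prefix_order.order_refl] )
          ultimately have "s l" using K_closure[OF xs(2)] by blast
          then show False using l by simp
        qed
      qed
    qed
  next
    case False
    then have u: "\<forall>n. \<exists>l. s l \<and> n \<le> length l" using K_class[OF xs(2)] by blast
    have "\<not> (\<forall>l. s l \<longrightarrow> t l)"
    proof
      assume "\<forall>l. s l \<longrightarrow> t l"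
      then have "s = t" using K_eq[OF xs(2) yt(2) u] by blast
      then show False using xy xs yt by simp
    qed
    then obtain l where l: "s l" "\<not> t l" by blast
    obtain a k where a: "prefix l a" "odd (length a)" "s (a @ [k])"
      using K_ext[OF xs(2) u l(1), of False] by auto
    show ?thesis
    proof (rule G2[OF x y a(2)])
      show "hh x (a @ [k])" using a s_def by simp
      show "\<not> hh y a" using K_closure[OF yt(2) _ a(1)] l t_def by blast
    qed
  qed
qed

lemma leQ_cases: "leQ z z' \<Longrightarrow> z \<noteq> z' \<Longrightarrow> \<exists>a b. z = fnode a \<and> z' = fnode b \<and> P_le a b"
  unfolding leQ_def by blast

lemma po: "partial_order_on_set Qs leQ"
  unfolding partial_order_on_set_def
proof (intro conjI ballI impI)
  fix x assume "x \<in> Qs" show "leQ x x" by (rule leQ_refl)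
next
  fix x y assume "x \<in> Qs" "y \<in> Qs" and h: "leQ x y \<and> leQ y x"
  show "x = y"
  proof (rule ccontr)
    assume ne: "x \<noteq> y"
    obtain a b where ab: "x = fnode a" "y = fnode b" "P_le a b" using leQ_cases h ne by blast
    then have "P_le b a" using h leQ_fnode by blast
    then have "a = b" using P_le_antisym ab by blast
    then show False using ne ab by simp
  qed
next
  fix x y z assume "x \<in> Qs" "y \<in> Qs" "z \<in> Qs" and h: "leQ x y \<and> leQ y z"
  show "leQ x z"
  proof (cases "x = y \<or> y = z")
    case True then show ?thesis using h by auto
  next
    case False
    obtain a b where ab: "x = fnode a" "y = fnode b" "P_le a b" using leQ_cases h False by blast
    obtain b' c where bc: "y = fnode b'" "z = fnode c" "P_le b' c" using leQ_cases h False by blast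
    have "b = b'" using ab bc fnode_inj by simp
    then have "P_le a c" using ab bc P_le_trans by blast
    then show ?thesis using ab bc leQ_fnode by simp
  qed
qed

lemma repr: "representable Qs leQ"
  unfolding representable_def
proof (intro conjI po exI[of _ TT])
  show "topspace TT = Qs" by simp
  show "compact_space TT" by (rule TT_compact)
  show "\<forall>x\<in>Qs. \<forall>y\<in>Qs. \<not> leQ y x \<longrightarrow>
        (\<exists>U. openin TT U \<and> closedin TT U \<and> down_set Qs leQ U \<and> x \<in> U \<and> y \<notin> U)"
    using sep_main unfolding sep_def by blast
qed

lemma comp_map: "(comparable_in UNIV P_le)\<^sup>*\<^sup>* a b \<Longrightarrow> (comparable_in Qs leQ)\<^sup>*\<^sup>* (fnode a) (fnode b)"
proof (induction rule: rtranclp_induct)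
  case base then show ?case by simp
next
  case (step y z)
  have "comparable_in Qs leQ (fnode y) (fnode z)"
    using step(2) fnode_Qs leQ_fnode unfolding comparable_in_def by blast
  then show ?case using step(3) by (meson rtranclp.rtrancl_into_rtrancl)
qed

lemma comp_back: "(comparable_in Qs leQ)\<^sup>*\<^sup>* z w \<Longrightarrow> z \<in> range fnode \<Longrightarrow> w \<in> range fnode"
proof (induction rule: rtranclp_induct)
  case base then show ?case by simp
next
  case (step y w)
  have "y \<in> range fnode" using step by blast
  show ?case
  proof (cases "y = w")
    case True then show ?thesis using \<open>y \<in> range fnode\<close> by simp
  next
    case False
    from step(2) have "leQ y w \<or> leQ w y" unfolding comparable_in_def by blast
    then show ?thesis using leQ_cases False by blast
  qed
qed

lemma comp_Q: "order_component Qs leQ (range fnode)"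
  unfolding order_component_def
proof (intro bexI[of _ "fnode []"] fnode_Qs)
  show "range fnode = {y \<in> Qs. (comparable_in Qs leQ)\<^sup>*\<^sup>* (fnode []) y}"
  proof
    show "range fnode \<subseteq> {y \<in> Qs. (comparable_in Qs leQ)\<^sup>*\<^sup>* (fnode []) y}"
      using comp_map[OF P_conn] fnode_Qs by blast
    show "{y \<in> Qs. (comparable_in Qs leQ)\<^sup>*\<^sup>* (fnode []) y} \<subseteq> range fnode"
      using comp_back by blast
  qed
qed

lemma iso: "order_iso fnode (UNIV :: nat list set) P_le (range fnode) leQ"
  unfolding order_iso_def
proof (intro conjI ballI)
  show "bij_betw fnode UNIV (range fnode)"
    unfolding bij_betw_def inj_def using fnode_inj by blast
  fix x y :: "nat list"
  show "P_le x y = leQ (fnode x) (fnode y)" using leQ_fnode by simp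
qed

theorem lemma2p5:
  shows "(\<exists>(Q :: nat list set set set) (le :: nat list set set \<Rightarrow> nat list set set \<Rightarrow> bool) C f.
            representable Q le \<and> order_component Q le C \<and>
            order_iso f (UNIV :: nat list set) P_le C le)
       \<and> order_component (UNIV :: nat list set) P_le UNIV"
  using repr comp_Q iso P_component by blast


end
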